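(* Let $X$ be a topological quandle and let $\{X_\alpha\}$ be the decomposition of $X$ into its path components, such that each $X_\alpha$ is indecomposable. Then $H_0(X)\cong\bigoplus_\alpha\mathbb{Z}$, with one copy of $\mathbb{Z}$ for each path component.
   Context: A quandle is a set with a binary operation $\triangleright$ such that $x\triangleright x=x$, each $\beta_y(x)=x\triangleright y$ is bijective, and $(x\triangleright y)\triangleright z=(x\triangleright z)\triangleright(y\triangleright z)$; write $x\triangleright^{-1}y=\beta_y^{-1}(x)$. A topological quandle is a topological space with a continuous quandle operation such that every $\beta_y$ is a homeomorphism. A path component $X_\alpha$ is called indecomposable if for every $x,y\in X_\alpha$ there exist $y_1,\dots,y_n\in X_\alpha$ and $e_1,\dots,e_n\in\{-1,1\}$ with $x=(\cdots((y\triangleright^{e_1}y_1)\triangleright^{e_2}y_2)\cdots)\triangleright^{e_n}y_n$. $C_0(X)$ is the free abelian group on points of $X$ (constant 0-simplices $\sigma_x$), $C_1(X)$ the free abelian group on paths $\sigma:[0,1]\to X$; for a path $\sigma_{[a,b]}$ from $a$ to $b$, $\partial_1\sigma_{[a,b]}=\sigma_a-\sigma_{a\triangleright b}$. $H_0(X)=C_0(X)/\partial_1(C_1(X))$. *)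

theory Defs
  imports "HOL-Analysis.Analysis" "HOL-Algebra.Free_Abelian_Groups"
begin

definition quandle_on :: "'a set \<Rightarrow> ('a \<Rightarrow> 'a \<Rightarrow> 'a) \<Rightarrow> bool" where
  "quandle_on S q \<longleftrightarrow>
     (\<forall>x\<in>S. \<forall>y\<in>S. q x y \<in> S) \<and>
     (\<forall>x\<in>S. q x x = x) \<and>
     (\<forall>y\<in>S. bij_betw (\<lambda>x. q x y) S S) \<and>
     (\<forall>x\<in>S. \<forall>y\<in>S. \<forall>z\<in>S. q (q x y) z = q (q x z) (q y z))"

definition topological_quandle :: "'a topology \<Rightarrow> ('a \<Rightarrow> 'a \<Rightarrow> 'a) \<Rightarrow> bool" where
  "topological_quandle X q \<longleftrightarrow>
     quandle_on (topspace X) q \<and>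
     continuous_map (prod_topology X X) X (\<lambda>(x, y). q x y) \<and>
     (\<forall>y\<in>topspace X. homeomorphic_map X X (\<lambda>x. q x y))"

text \<open>x \<triangleright>^e y, with e = True meaning exponent 1 and e = False meaning exponent -1.\<close>
definition qact :: "'a set \<Rightarrow> ('a \<Rightarrow> 'a \<Rightarrow> 'a) \<Rightarrow> bool \<Rightarrow> 'a \<Rightarrow> 'a \<Rightarrow> 'a" where
  "qact S q e x y = (if e then q x y else inv_into S (\<lambda>z. q z y) x)"

definition qiter :: "'a set \<Rightarrow> ('a \<Rightarrow> 'a \<Rightarrow> 'a) \<Rightarrow> 'a \<Rightarrow> ('a \<times> bool) list \<Rightarrow> 'a" where
  "qiter S q y ys = foldl (\<lambda>a (z, e). qact S q e a z) y ys"

definition indecomposable_component ::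
    "'a set \<Rightarrow> ('a \<Rightarrow> 'a \<Rightarrow> 'a) \<Rightarrow> 'a set \<Rightarrow> bool" where
  "indecomposable_component S q C \<longleftrightarrow>
     (\<forall>x\<in>C. \<forall>y\<in>C. \<exists>ys. set (map fst ys) \<subseteq> C \<and> x = qiter S q y ys)"

definition C0 :: "'a topology \<Rightarrow> ('a \<Rightarrow>\<^sub>0 int) monoid" where
  "C0 X = free_Abelian_group (topspace X)"

definition C1 :: "'a topology \<Rightarrow> ((real \<Rightarrow> 'a) \<Rightarrow>\<^sub>0 int) monoid" where
  "C1 X = free_Abelian_group {g. pathin X g}"

definition bd1 :: "('a \<Rightarrow> 'a \<Rightarrow> 'a) \<Rightarrow> ((real \<Rightarrow> 'a) \<Rightarrow>\<^sub>0 int) \<Rightarrow> ('a \<Rightarrow>\<^sub>0 int)" where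
  "bd1 q c = frag_extend (\<lambda>g. frag_of (g 0) - frag_of (q (g 0) (g 1))) c"

definition H0 :: "'a topology \<Rightarrow> ('a \<Rightarrow> 'a \<Rightarrow> 'a) \<Rightarrow> ('a \<Rightarrow>\<^sub>0 int) set monoid" where
  "H0 X q = C0 X Mod (bd1 q ` carrier (C1 X))"

end

theory Submission
  imports Defs
begin

lemma left_cont:
  assumes "topological_quandle X q" "w \<in> topspace X"
  shows "continuous_map X X (\<lambda>y. q w y)"
proof -
  have c: "continuous_map (prod_topology X X) X (\<lambda>(x, y). q x y)"
    using assms(1) by (simp add: topological_quandle_def)
  have "continuous_map X (prod_topology X X) (\<lambda>y. (w, y))"
    by (intro continuous_map_pairedI continuous_map_const[THEN iffD2] continuous_map_id) (use assms(2) in auto)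
  from continuous_map_compose[OF this c] show ?thesis by (simp add: o_def)
qed

lemma bd1_of: "bd1 q (frag_of g) = frag_of (g 0) - frag_of (q (g 0) (g 1))"
  by (simp add: bd1_def)

lemma N_diff:
  assumes "a \<in> bd1 q ` carrier (C1 X)" "b \<in> bd1 q ` carrier (C1 X)"
  shows "a - b \<in> bd1 q ` carrier (C1 X)"
proof -
  obtain c d where "a = bd1 q c" "b = bd1 q d" "c \<in> carrier (C1 X)" "d \<in> carrier (C1 X)"
    using assms by blast
  then have "a - b = bd1 q (c - d)" "c - d \<in> carrier (C1 X)"
    by (auto simp: bd1_def frag_extend_diff C1_def dest: subsetD[OF keys_diff])
  then show ?thesis by blast
qed

lemma N_zero: "0 \<in> bd1 q ` carrier (C1 X)"
proof -
  have "bd1 q 0 = 0" "(0::(real \<Rightarrow> 'a) \<Rightarrow>\<^sub>0 int) \<in> carrier (C1 X)" by (auto simp: bd1_def C1_def)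
  then show ?thesis by (metis image_eqI)
qed

lemma N_path:
  assumes "pathin X g"
  shows "frag_of (g 0) - frag_of (q (g 0) (g 1)) \<in> bd1 q ` carrier (C1 X)"
proof -
  have "frag_of g \<in> carrier (C1 X)" using assms by (simp add: C1_def)
  then show ?thesis by (metis bd1_of image_eqI)
qed

lemma step:
  assumes tq: "topological_quandle X q" and pc: "path_component_of X w z"
  shows "path_component_of X w (qact (topspace X) q e w z) \<and>
         frag_of (qact (topspace X) q e w z) - frag_of w \<in> bd1 q ` carrier (C1 X)"
proof -
  let ?S = "topspace X"
  have wS: "w \<in> ?S" and zS: "z \<in> ?S" using path_component_in_topspace[OF pc] by auto
  obtain g where g: "pathin X g" "g 0 = w" "g 1 = z" using pc by (auto simp: path_component_of_def)
  have qo: "quandle_on ?S q" using tq by (simp add: topological_quandle_def)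
  show ?thesis
  proof (cases e)
    case True
    have "pathin X ((\<lambda>y. q w y) \<circ> g)"
      by (rule pathin_compose[OF g(1) left_cont[OF tq wS]])
    moreover have "((\<lambda>y. q w y) \<circ> g) 0 = w" "((\<lambda>y. q w y) \<circ> g) 1 = q w z"
      using g qo wS by (auto simp: quandle_on_def)
    ultimately have "path_component_of X w (q w z)" by (auto simp: path_component_of_def)
    moreover have "frag_of (q w z) - frag_of w = 0 - (frag_of w - frag_of (q w z))" by simp
    moreover have "frag_of w - frag_of (q w z) \<in> bd1 q ` carrier (C1 X)"
      using N_path[OF g(1), of q] g by simp
    ultimately show ?thesis using True N_diff[OF N_zero] by (metis qact_def)
  next
    case False
    let ?f = "\<lambda>x. q x z"
    have hm: "homeomorphic_map X X ?f" using tq zS by (simp add: topological_quandle_def)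
    then obtain f' where f': "homeomorphic_maps X X ?f f'" by (auto simp: homeomorphic_map_maps)
    have bij: "bij_betw ?f ?S ?S" using qo zS by (simp add: quandle_on_def)
    have f'S: "\<And>y. y \<in> ?S \<Longrightarrow> f' y \<in> ?S \<and> q (f' y) z = y"
      using f' unfolding homeomorphic_maps_def continuous_map_def by auto
    have w'eq: "inv_into ?S ?f w = f' w"
    proof -
      have "inv_into ?S ?f (?f (f' w)) = f' w"
        using bij f'S[OF wS] unfolding bij_betw_def by (metis inv_into_f_f)
      then show ?thesis using f'S[OF wS] by simp
    qed
    have zz: "q z z = z" using qo zS by (simp add: quandle_on_def)
    have f'z: "f' z = z"
      using f' zS zz unfolding homeomorphic_maps_def by metis
    have cf': "continuous_map X X f'" using f' by (simp add: homeomorphic_maps_def)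
    have h: "pathin X (f' \<circ> g)" by (rule pathin_compose[OF g(1) cf'])
    have h0: "(f' \<circ> g) 0 = f' w" and h1: "(f' \<circ> g) 1 = z" using g f'z by auto
    have "path_component_of X (f' w) z" using h h0 h1 by (auto simp: path_component_of_def)
    then have "path_component_of X w (f' w)"
      using pc by (meson path_component_of_sym path_component_of_trans)
    moreover have "frag_of (f' w) - frag_of (q (f' w) z) \<in> bd1 q ` carrier (C1 X)"
      using N_path[OF h, of q] h0 h1 by simp
    ultimately show ?thesis using False w'eq f'S[OF wS] by (simp add: qact_def)
  qed
qed

lemma kd: "Poly_Mapping.keys a \<subseteq> S \<Longrightarrow> Poly_Mapping.keys b \<subseteq> S \<Longrightarrow> Poly_Mapping.keys (a - b) \<subseteq> S"
  by (meson Un_least keys_diff order.trans)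

lemma qiter_snoc: "qiter S q y (ys @ [(z, e)]) = qact S q e (qiter S q y ys) z"
  by (simp add: qiter_def)

lemma iter_lemma:
  assumes tq: "topological_quandle X q" and yS: "y \<in> topspace X"
  shows "set (map fst ys) \<subseteq> path_component_of_set X y \<Longrightarrow>
     path_component_of X y (qiter (topspace X) q y ys) \<and>
     frag_of (qiter (topspace X) q y ys) - frag_of y \<in> bd1 q ` carrier (C1 X)"
proof (induction ys rule: rev_induct)
  case Nil
  then show ?case using yS N_zero by (simp add: qiter_def path_component_of_refl)
next
  case (snoc p ys)
  obtain z e where p: "p = (z, e)" by (cases p)
  let ?w = "qiter (topspace X) q y ys"
  have IH: "path_component_of X y ?w" "frag_of ?w - frag_of y \<in> bd1 q ` carrier (C1 X)"
    using snoc by auto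
  have "path_component_of X y z" using snoc.prems p by auto
  then have wz: "path_component_of X ?w z"
    using IH(1) by (meson path_component_of_sym path_component_of_trans)
  from step[OF tq wz, of e] obtain
    a: "path_component_of X ?w (qact (topspace X) q e ?w z)" and
    b: "frag_of (qact (topspace X) q e ?w z) - frag_of ?w \<in> bd1 q ` carrier (C1 X)" by blast
  have "frag_of (qact (topspace X) q e ?w z) - frag_of y
     = (frag_of (qact (topspace X) q e ?w z) - frag_of ?w) - (0 - (frag_of ?w - frag_of y))" by simp
  moreover have "\<dots> \<in> bd1 q ` carrier (C1 X)" by (intro N_diff b N_zero IH(2))
  moreover have "path_component_of X y (qact (topspace X) q e ?w z)"
    using IH(1) a by (rule path_component_of_trans)
  moreover have "qiter (topspace X) q y (ys @ [p]) = qact (topspace X) q e ?w z"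
    unfolding p by (rule qiter_snoc)
  ultimately show ?case by simp
qed

lemma K:
  assumes tq: "topological_quandle X q"
    and ind: "\<forall>C\<in>path_components_of X. indecomposable_component (topspace X) q C"
    and pc: "path_component_of X x y"
  shows "frag_of x - frag_of y \<in> bd1 q ` carrier (C1 X)"
proof -
  have yS: "y \<in> topspace X" using path_component_in_topspace[OF pc] by (rule conjunct2)
  let ?C = "path_component_of_set X y"
  have C: "?C \<in> path_components_of X" using path_component_in_path_components_of[THEN iffD2, OF yS] .
  have "path_component_of X y x" using pc by (rule path_component_of_sym)
  then have "x \<in> ?C" by simp
  have "y \<in> ?C" using yS by (simp add: path_component_of_refl)
  have ic: "indecomposable_component (topspace X) q ?C" using ind C by (rule bspec)
  have "\<exists>ys. set (map fst ys) \<subseteq> ?C \<and> x = qiter (topspace X) q y ys"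
    by (rule ic[unfolded indecomposable_component_def, rule_format, OF \<open>x \<in> ?C\<close> \<open>y \<in> ?C\<close>])
  then obtain ys where ys: "set (map fst ys) \<subseteq> ?C" "x = qiter (topspace X) q y ys"
    by (elim exE conjE)
  have "frag_of (qiter (topspace X) q y ys) - frag_of y \<in> bd1 q ` carrier (C1 X)"
    using iter_lemma[OF tq yS ys(1)] by (rule conjunct2)
  then show ?thesis unfolding ys(2)[symmetric] .
qed

theorem mainTheorem7:
  fixes X :: "'a topology" and q :: "'a \<Rightarrow> 'a \<Rightarrow> 'a"
  assumes "topological_quandle X q"
    and "\<forall>C\<in>path_components_of X. indecomposable_component (topspace X) q C"
  shows "H0 X q \<cong> free_Abelian_group (path_components_of X)"
proof -
  let ?S = "topspace X"
  let ?P = "path_components_of X"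
  let ?G = "C0 X"
  let ?H = "free_Abelian_group ?P"
  let ?N = "bd1 q ` carrier (C1 X)"
  define phi where "phi = frag_extend (\<lambda>x. frag_of (path_component_of_set X x))"
  define r where "r = (\<lambda>C::'a set. SOME x. x \<in> C)"
  define psi where "psi = frag_extend (\<lambda>C. frag_of (r C))"
  have phi_keys: "Poly_Mapping.keys (phi c) \<subseteq> ?P" if "Poly_Mapping.keys c \<subseteq> ?S" for c
  proof -
    have "Poly_Mapping.keys (phi c) \<subseteq> (\<Union>x \<in> Poly_Mapping.keys c. Poly_Mapping.keys (frag_of (path_component_of_set X x)))"
      unfolding phi_def by (rule keys_frag_extend)
    also have "\<dots> \<subseteq> ?P" using that path_component_in_path_components_of by fastforce
    finally show ?thesis .
  qed
  have hom: "phi \<in> hom ?G ?H"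
  proof (rule homI)
    fix x assume "x \<in> carrier ?G"
    then show "phi x \<in> carrier ?H" using phi_keys by (simp add: C0_def)
  next
    fix x y assume "x \<in> carrier ?G" "y \<in> carrier ?G"
    then show "phi (x \<otimes>\<^bsub>?G\<^esub> y) = phi x \<otimes>\<^bsub>?H\<^esub> phi y"
      by (simp add: C0_def phi_def frag_extend_add)
  qed
  have gh: "group_hom ?G ?H phi"
    unfolding group_hom_def group_hom_axioms_def using hom by (simp add: C0_def)
  have rC: "r C \<in> ?S \<and> path_component_of_set X (r C) = C" if CP: "C \<in> ?P" for C
  proof -
    obtain a where a: "a \<in> ?S" "C = path_component_of_set X a" using CP unfolding path_components_of_def by blast
    have "a \<in> C" using a by (simp add: path_component_of_refl)
    then have "r C \<in> C" unfolding r_def by (rule someI)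
    then have "path_component_of X a (r C)" using a by simp
    then have e: "a \<in> ?S \<and> r C \<in> ?S \<and> path_component_of X a = path_component_of X (r C)"
      by (subst (asm) path_component_of_equiv)
    then have "r C \<in> ?S" "path_component_of X a = path_component_of X (r C)" using e by blast+
    then show ?thesis using a(2) by metis
  qed
  have surj: "phi ` carrier ?G = carrier ?H"
  proof
    show "phi ` carrier ?G \<subseteq> carrier ?H" using phi_keys by (auto simp: C0_def)
  next
    show "carrier ?H \<subseteq> phi ` carrier ?G"
    proof
      fix d assume "d \<in> carrier ?H"
      then have "Poly_Mapping.keys d \<subseteq> ?P" by simp
      then have "Poly_Mapping.keys (psi d) \<subseteq> ?S \<and> phi (psi d) = d"
      proof (induction d rule: frag_induction)
        case zero then show ?case by (simp add: psi_def phi_def)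
      next
        case (one C) then show ?case using rC[OF one] by (simp add: psi_def phi_def)
      next
        case (diff a b) then show ?case
          by (simp add: psi_def phi_def frag_extend_diff kd)
      qed
      then have "psi d \<in> carrier ?G" "d = phi (psi d)" by (auto simp: C0_def)
      then show "d \<in> phi ` carrier ?G" by (rule rev_image_eqI)
    qed
  qed
  have ker: "kernel ?G ?H phi = ?N"
  proof
    show "?N \<subseteq> kernel ?G ?H phi"
    proof
      fix b assume "b \<in> ?N"
      then obtain c where c: "Poly_Mapping.keys c \<subseteq> {g. pathin X g}" "b = bd1 q c"
        by (auto simp: C1_def)
      from c(1) have "Poly_Mapping.keys (bd1 q c) \<subseteq> ?S \<and> phi (bd1 q c) = 0"
      proof (induction c rule: frag_induction)
        case zero then show ?case by (simp add: bd1_def phi_def)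
      next
        case (one g)
        then have g: "pathin X g" by simp
        have g0: "g 0 \<in> ?S" and g1: "g 1 \<in> ?S"
          using g by (auto simp: pathin_def continuous_map_def)
        have pc: "path_component_of X (g 0) (g 1)" using g by (auto simp: path_component_of_def)
        have "pathin X ((\<lambda>y. q (g 0) y) \<circ> g)"
          by (rule pathin_compose[OF g left_cont[OF assms(1) g0]])
        moreover have "((\<lambda>y. q (g 0) y) \<circ> g) 0 = g 0"
          using g0 assms(1) by (auto simp: topological_quandle_def quandle_on_def)
        ultimately have pc2: "path_component_of X (g 0) (q (g 0) (g 1))"
          by (auto simp: path_component_of_def)
        then have "g 0 \<in> ?S \<and> q (g 0) (g 1) \<in> ?S \<and> path_component_of X (g 0) = path_component_of X (q (g 0) (g 1))"
          by (subst (asm) path_component_of_equiv)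
        then have f: "path_component_of X (g 0) = path_component_of X (q (g 0) (g 1))" by blast
        have e: "path_component_of_set X (q (g 0) (g 1)) = path_component_of_set X (g 0)"
          by (rule arg_cong[OF f[symmetric]])
        moreover have "q (g 0) (g 1) \<in> ?S" using path_component_in_topspace[OF pc2] by simp
        moreover have "Poly_Mapping.keys (bd1 q (frag_of g)) \<subseteq> ?S"
          unfolding bd1_of by (rule kd) (use g0 \<open>q (g 0) (g 1) \<in> ?S\<close> in auto)
        ultimately show ?case unfolding bd1_of phi_def frag_extend_diff frag_extend_of e by simp
      next
        case (diff a b) then show ?case
          by (simp add: bd1_def phi_def frag_extend_diff kd)
      qed
      then show "b \<in> kernel ?G ?H phi" using c by (simp add: kernel_def C0_def)
    qed
  next
    show "kernel ?G ?H phi \<subseteq> ?N"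
    proof
      fix c assume "c \<in> kernel ?G ?H phi"
      then have c: "Poly_Mapping.keys c \<subseteq> ?S" "phi c = 0"
        unfolding kernel_def C0_def by (simp_all only: mem_Collect_eq carrier_free_Abelian_group_iff one_free_Abelian_group)
      from c(1) have "c - psi (phi c) \<in> ?N"
      proof (induction c rule: frag_induction)
        case zero
        have "(0::'a \<Rightarrow>\<^sub>0 int) - psi (phi 0) = 0" unfolding psi_def phi_def frag_extend_0 by simp
        then show ?case using N_zero by (simp only:)
      next
        case (one x)
        have "path_component_of_set X x \<in> ?P" using one by (rule path_component_in_path_components_of[THEN iffD2])
        from rC[OF this] have rr: "r (path_component_of_set X x) \<in> ?S"
          "path_component_of_set X (r (path_component_of_set X x)) = path_component_of_set X x"
          by blast+
        have "r (path_component_of_set X x) \<in> path_component_of_set X (r (path_component_of_set X x))"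
          using rr(1) by (simp only: mem_Collect_eq path_component_of_refl)
        then have "r (path_component_of_set X x) \<in> path_component_of_set X x"
          by (simp only: rr(2))
        then have "path_component_of X x (r (path_component_of_set X x))"
          by (simp only: mem_Collect_eq)
        from K[OF assms this] show ?case unfolding psi_def phi_def frag_extend_of .
      next
        case (diff a b)
        have eq: "(a - b) - psi (phi (a - b)) = (a - psi (phi a)) - (b - psi (phi b))"
          unfolding psi_def phi_def frag_extend_diff by simp
        show ?case unfolding eq by (rule N_diff[OF diff.IH])
      qed
      moreover have "psi (phi c) = 0" unfolding c(2) psi_def by (rule frag_extend_0)
      ultimately show "c \<in> ?N" by simp
    qed
  qed
  have "(?G Mod kernel ?G ?H phi) \<cong> ?H"
    by (rule group_hom.FactGroup_iso[OF gh surj])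
  then show ?thesis unfolding ker H0_def .
qed

end
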